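(* Let $A=\{(\alpha,\beta)\in\mathbb R^2:(\beta-1)^2+4\alpha\beta\ge0,\ \beta<0,\ \alpha\le2\}$ and $\widetilde A=\{(\alpha,\beta)\in\mathbb R^2:\beta>0,\ \alpha\ge1\}$. If $(\alpha,\beta)\in A$, then for every $n\ge1$ the polynomial $P_n^{(\alpha,\beta)}$ has only real zeros. If $(\alpha,\beta)\in\widetilde A$, then for every integer $n$ with $1\le n\le\lceil\alpha\rceil$ the polynomial $P_n^{(\alpha,\beta)}$ has only real zeros, where $\lceil\alpha\rceil$ is the smallest integer $\ge\alpha$.
   Context: For real $\alpha,\beta$ with $\beta\neq0$, the polynomials $P_n^{(\alpha,\beta)}(x)$, $n\ge0$, are defined by $\sum_{n\ge0}P_n^{(\alpha,\beta)}(x)\frac{t^n}{n!}=(1-t)^{\alpha}\exp\big(x((1-t)^{\beta}-1)\big)$ (formal power series in $t$). A polynomial "has only real zeros" if all its complex zeros are real. *)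

theory Defs
  imports "HOL-Analysis.Analysis" "HOL-Computational_Algebra.Formal_Power_Series"
begin

definition one_minus_t_pow :: "real \<Rightarrow> complex fps" where
  "one_minus_t_pow a = fps_binomial (complex_of_real a) oo (- fps_X)"

definition gen_fps :: "real \<Rightarrow> real \<Rightarrow> complex \<Rightarrow> complex fps" where
  "gen_fps \<alpha> \<beta> x = one_minus_t_pow \<alpha> * (fps_exp x oo (one_minus_t_pow \<beta> - 1))"

definition P :: "nat \<Rightarrow> real \<Rightarrow> real \<Rightarrow> complex \<Rightarrow> complex" where
  "P n \<alpha> \<beta> x = of_nat (fact n) * fps_nth (gen_fps \<alpha> \<beta> x) n"

definition only_real_zeros :: "(complex \<Rightarrow> complex) \<Rightarrow> bool" where
  "only_real_zeros f \<longleftrightarrow> (\<forall>z. f z = 0 \<longrightarrow> z \<in> \<real>)"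

end

theory Submission
  imports Defs
begin


lemma h1: "(- fps_X :: complex fps) ^ i = fps_const ((-1)^i) * fps_X ^ i"
proof (induction i)
  case 0 then show ?case by simp
next
  case (Suc i)
  have "(- fps_X :: complex fps) ^ Suc i = (- fps_X) * (- fps_X) ^ i" by (rule power_Suc)
  also have "\<dots> = (- fps_X) * (fps_const ((-1)^i) * fps_X ^ i)" by (simp only: Suc)
  also have "\<dots> = fps_const ((-1)^Suc i) * fps_X ^ Suc i"
    by (simp only: power_Suc fps_const_mult[symmetric] fps_const_neg[symmetric] fps_const_1_eq_1 mult_minus_left mult_minus_right mult_1_left mult.left_commute)
  finally show ?case .
qed
lemma omX_pow_nth: "fps_nth ((- fps_X :: complex fps) ^ i) n = (if i = n then (-1)^i else 0)"
  unfolding h1 fps_mult_left_const_nth fps_X_power_nth by auto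

lemma omt_nth: "fps_nth (one_minus_t_pow a) n = (-1)^n * (complex_of_real a gchoose n)"
proof -
  note h = omX_pow_nth
  have "fps_nth (one_minus_t_pow a) n = (\<Sum>i\<in>{0..n}. (if i = n then (complex_of_real a gchoose i) * (-1)^i else 0))"
    unfolding one_minus_t_pow_def fps_compose_nth
    by (rule sum.cong) (auto simp: h)
  also have "\<dots> = (-1)^n * (complex_of_real a gchoose n)"
    by (simp only: sum.delta[OF finite_atLeastAtMost]) (simp add: mult.commute)
  finally show ?thesis .
qed

lemma omt_0[simp]: "fps_nth (one_minus_t_pow a) 0 = 1"
  by (simp add: omt_nth)

lemma omt_mult: "one_minus_t_pow a * one_minus_t_pow b = one_minus_t_pow (a + b)"
  unfolding one_minus_t_pow_def
  by (subst fps_compose_mult_distrib[symmetric]) (simp_all add: fps_binomial_add_mult)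

lemma ring_aux:
  fixes x u v a :: complex
  assumes "x = of_nat (Suc n) * ((-1)^Suc n * u) - of_nat n * ((-1)^n * v)"
      and "a * v = of_nat n * v + of_nat (Suc n) * u"
  shows "x = - (a * ((-1)^n * v))"
proof -
  have "x = - ((-1)^n * (of_nat n * v + of_nat (Suc n) * u))"
    using assms(1) by (simp add: algebra_simps)
  then have "x = - ((-1)^n * (a * v))" by (simp only: assms(2)[symmetric])
  then show ?thesis by (simp add: algebra_simps)
qed

lemma omX_nth: "fps_nth ((1 - fps_X) * (f :: complex fps)) n = fps_nth f n - (if n = 0 then 0 else fps_nth f (n - 1))"
proof -
  have "(1 - fps_X) * f = f - fps_X * f" by (simp add: left_diff_distrib)
  then show ?thesis by simp
qed

lemma omt_deriv: "(1 - fps_X) * fps_deriv (one_minus_t_pow a) = - fps_const (complex_of_real a) * one_minus_t_pow a"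
proof (rule fps_ext)
  fix n
  define f where "f = fps_deriv (one_minus_t_pow a)"
  have d: "fps_nth f k = of_nat (Suc k) * ((-1)^Suc k * (complex_of_real a gchoose Suc k))" for k
    unfolding f_def fps_deriv_nth omt_nth by simp
  have l: "(if n = 0 then 0 else fps_nth f (n - 1)) = of_nat n * ((-1)^n * (complex_of_real a gchoose n))"
    by (cases n) (simp_all only: d, simp_all)
  have "fps_nth ((1 - fps_X) * f) n = - (complex_of_real a * ((-1)^n * (complex_of_real a gchoose n)))"
  proof (rule ring_aux[where u = "complex_of_real a gchoose Suc n"])
    show "fps_nth ((1 - fps_X) * f) n = of_nat (Suc n) * ((-1)^Suc n * (complex_of_real a gchoose Suc n)) -
      of_nat n * ((-1)^n * (complex_of_real a gchoose n))"
      unfolding omX_nth unfolding l unfolding d ..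
  qed (rule gbinomial_mult_1)
  then show "fps_nth ((1 - fps_X) * fps_deriv (one_minus_t_pow a)) n = fps_nth (- fps_const (complex_of_real a) * one_minus_t_pow a) n"
    unfolding f_def by (simp add: omt_nth)
qed

lemma g0[simp]: "fps_nth (one_minus_t_pow b - 1) 0 = 0"
  by simp

lemma E_deriv: "fps_deriv (fps_exp x oo (one_minus_t_pow b - 1)) =
   fps_const x * (fps_exp x oo (one_minus_t_pow b - 1)) * fps_deriv (one_minus_t_pow b)"
proof -
  have "fps_deriv (fps_exp x oo (one_minus_t_pow b - 1)) =
     ((fps_const x * fps_exp x) oo (one_minus_t_pow b - 1)) * fps_deriv (one_minus_t_pow b - 1)"
    by (subst fps_compose_deriv) simp_all
  also have "(fps_const x * fps_exp x) oo (one_minus_t_pow b - 1) = fps_const x * (fps_exp x oo (one_minus_t_pow b - 1))"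
    by (subst fps_compose_mult_distrib) simp_all
  finally show ?thesis by simp
qed

lemma ring2: "(u::'a::comm_ring_1) * (Oa * (c * E * Ob') + Oa' * E) = (u * Oa') * E + c * Oa * E * (u * Ob')"
  by (simp add: algebra_simps)

lemma ring3: "(- A * Oa) * E + c * Oa * E * (- B * Ob) = - A * (Oa * E) - (c * B) * (Oa * Ob * (E::'a::comm_ring_1))"
  by (simp add: algebra_simps)

lemma gen_ode: "(1 - fps_X) * fps_deriv (gen_fps a b x) =
   - fps_const (complex_of_real a) * gen_fps a b x - fps_const (x * complex_of_real b) * gen_fps (a + b) b x"
proof -
  define E where "E = fps_exp x oo (one_minus_t_pow b - 1)"
  define Oa where "Oa = one_minus_t_pow a"
  define Ob where "Ob = one_minus_t_pow b"
  have da: "(1 - fps_X) * fps_deriv Oa = - fps_const (complex_of_real a) * Oa" unfolding Oa_def by (rule omt_deriv)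
  have db: "(1 - fps_X) * fps_deriv Ob = - fps_const (complex_of_real b) * Ob" unfolding Ob_def by (rule omt_deriv)
  have dE: "fps_deriv E = fps_const x * E * fps_deriv Ob" unfolding E_def Ob_def by (rule E_deriv)
  have gab: "gen_fps (a + b) b x = Oa * Ob * E" unfolding gen_fps_def E_def Oa_def Ob_def omt_mult ..
  have "(1 - fps_X) * fps_deriv (gen_fps a b x) = ((1 - fps_X) * fps_deriv Oa) * E + fps_const x * Oa * E * ((1 - fps_X) * fps_deriv Ob)"
    unfolding gen_fps_def E_def[symmetric] Oa_def[symmetric] fps_deriv_mult dE by (rule ring2)
  also have "\<dots> = - fps_const (complex_of_real a) * (Oa * E) - (fps_const x * fps_const (complex_of_real b)) * (Oa * Ob * E)"
    unfolding da db by (rule ring3)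
  also have "fps_const x * fps_const (complex_of_real b) = fps_const (x * complex_of_real b)"
    by (rule fps_const_mult)
  finally show ?thesis unfolding gab unfolding gen_fps_def E_def[symmetric] Oa_def[symmetric] .
qed

lemma P_rec: "P (Suc n) a b x = (of_nat n - complex_of_real a) * P n a b x - x * complex_of_real b * P n (a + b) b x"
proof -
  have h: "fps_nth ((1 - fps_X) * fps_deriv (gen_fps a b x)) n =
      of_nat (Suc n) * fps_nth (gen_fps a b x) (Suc n) - of_nat n * fps_nth (gen_fps a b x) n"
    by (cases n) (simp_all add: algebra_simps)
  have "of_nat (Suc n) * fps_nth (gen_fps a b x) (Suc n) - of_nat n * fps_nth (gen_fps a b x) n =
     - complex_of_real a * fps_nth (gen_fps a b x) n - x * complex_of_real b * fps_nth (gen_fps (a+b) b x) n"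
    using arg_cong[OF gen_ode[of a b x], of "\<lambda>f. fps_nth f n"] unfolding h by simp
  then have "of_nat (fact n) * (of_nat (Suc n) * fps_nth (gen_fps a b x) (Suc n) - of_nat n * fps_nth (gen_fps a b x) n) =
     of_nat (fact n) * (- complex_of_real a * fps_nth (gen_fps a b x) n - x * complex_of_real b * fps_nth (gen_fps (a+b) b x) n)"
    by simp
  then show ?thesis unfolding P_def by (simp add: algebra_simps)
qed

definition cf :: "nat \<Rightarrow> real \<Rightarrow> real \<Rightarrow> nat \<Rightarrow> complex" where
  "cf n a b k = of_nat (fact n) / of_nat (fact k) * fps_nth (one_minus_t_pow a * (one_minus_t_pow b - 1) ^ k) n"

definition PPc :: "nat \<Rightarrow> real \<Rightarrow> real \<Rightarrow> complex poly" where
  "PPc n a b = (\<Sum>k\<le>n. monom (cf n a b k) k)"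

lemma gpow_zero: "j < k \<Longrightarrow> fps_nth ((one_minus_t_pow b - 1) ^ k) j = 0"
  using startsby_zero_power_prefix[of "one_minus_t_pow b - 1" k] by simp

lemma P_poly: "P n a b x = poly (PPc n a b) x"
proof -
  define g where "g = one_minus_t_pow b - 1"
  define Oa where "Oa = one_minus_t_pow a"
  have g0': "fps_nth g 0 = 0" unfolding g_def by simp
  have Enth: "fps_nth (fps_exp x oo g) j = (\<Sum>k\<le>n. x ^ k / of_nat (fact k) * fps_nth (g ^ k) j)" if "j \<le> n" for j
  proof -
    have "fps_nth (fps_exp x oo g) j = (\<Sum>k\<in>{0..j}. x ^ k / of_nat (fact k) * fps_nth (g ^ k) j)"
      unfolding fps_compose_nth by simp
    also have "\<dots> = (\<Sum>k\<le>n. x ^ k / of_nat (fact k) * fps_nth (g ^ k) j)"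
      by (rule sum.mono_neutral_left) (use that in \<open>auto simp: g_def gpow_zero\<close>)
    finally show ?thesis .
  qed
  have "P n a b x = of_nat (fact n) * (\<Sum>i=0..n. fps_nth Oa i * (\<Sum>k\<le>n. x ^ k / of_nat (fact k) * fps_nth (g ^ k) (n - i)))"
    unfolding P_def gen_fps_def g_def[symmetric] Oa_def[symmetric] fps_mult_nth
    by (intro arg_cong[where f = "\<lambda>u. of_nat (fact n) * u"] sum.cong refl) (simp add: Enth)
  also have "(\<Sum>i=0..n. fps_nth Oa i * (\<Sum>k\<le>n. x ^ k / of_nat (fact k) * fps_nth (g ^ k) (n - i)))
     = (\<Sum>i=0..n. \<Sum>k\<le>n. fps_nth Oa i * (x ^ k / of_nat (fact k) * fps_nth (g ^ k) (n - i)))"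
    by (simp only: sum_distrib_left)
  also have "\<dots> = (\<Sum>k\<le>n. \<Sum>i=0..n. fps_nth Oa i * (x ^ k / of_nat (fact k) * fps_nth (g ^ k) (n - i)))"
    by (rule sum.swap)
  also have "of_nat (fact n) * \<dots> = (\<Sum>k\<le>n. x ^ k * (of_nat (fact n) / of_nat (fact k) * (\<Sum>i=0..n. fps_nth Oa i * fps_nth (g ^ k) (n - i))))"
    unfolding sum_distrib_left by (intro sum.cong refl) (simp add: sum_distrib_left mult_ac)
  also have "\<dots> = poly (PPc n a b) x"
    unfolding PPc_def poly_sum poly_monom cf_def fps_mult_nth g_def Oa_def by (simp add: mult.commute)
  finally show ?thesis .
qed

lemma coeff_PPc: "coeff (PPc n a b) j = (if j \<le> n then cf n a b j else 0)"
  unfolding PPc_def coeff_sum coeff_monom by (simp add: sum.delta)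

lemma cf_vanish: "cf n a b (Suc n) = 0"
proof -
  have "fps_nth (one_minus_t_pow a * (one_minus_t_pow b - 1) ^ Suc n) n = 0"
    unfolding fps_mult_nth by (rule sum.neutral) (auto simp: gpow_zero simp del: power_Suc)
  then show ?thesis unfolding cf_def by simp
qed

lemma cf_shift: "cf n (a + b) b j = cf n a b j + of_nat (Suc j) * cf n a b (Suc j)"
proof -
  define g where "g = one_minus_t_pow b - 1"
  have "one_minus_t_pow (a + b) * g ^ j = one_minus_t_pow a * g ^ Suc j + one_minus_t_pow a * g ^ j"
    unfolding omt_mult[symmetric] g_def by (simp add: algebra_simps)
  then have e: "fps_nth (one_minus_t_pow (a + b) * g ^ j) n = fps_nth (one_minus_t_pow a * g ^ Suc j) n + fps_nth (one_minus_t_pow a * g ^ j) n"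
    by simp
  have fs: "(of_nat (fact (Suc j)) :: complex) = of_nat (Suc j) * of_nat (fact j)"
    by (simp add: fact_Suc algebra_simps)
  have nz1: "(of_nat (fact j) :: complex) \<noteq> 0" by (simp only: of_nat_eq_0_iff fact_nonzero not_False_eq_True)
  have nz2: "(of_nat (Suc j) :: complex) \<noteq> 0" by (simp only: of_nat_eq_0_iff nat.distinct not_False_eq_True)
  have f: "of_nat (Suc j) * (of_nat (fact n) / of_nat (fact (Suc j))) = (of_nat (fact n) / of_nat (fact j) :: complex)"
    unfolding fs using nz1 nz2 by (simp add: field_simps del: of_nat_Suc)
  have f2: "of_nat (Suc j) * (of_nat (fact n) / of_nat (fact (Suc j)) * X) = of_nat (fact n) / of_nat (fact j) * X" for X :: complex
    using f by (simp only: mult.assoc[symmetric])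
  show ?thesis unfolding cf_def g_def[symmetric] e
    by (simp only: f2 distrib_left add.commute)
qed

lemma PPc_shift: "PPc n (a + b) b = PPc n a b + pderiv (PPc n a b)"
  by (rule poly_eqI) (auto simp: coeff_PPc coeff_pderiv cf_shift cf_vanish Suc_le_eq dest: le_neq_implies_less)

lemma PPc_rec: "PPc (Suc n) a b = smult (of_nat n - complex_of_real a) (PPc n a b)
    - smult (complex_of_real b) (pCons 0 (PPc n a b + pderiv (PPc n a b)))"
proof -
  have "poly (PPc (Suc n) a b) x = poly (smult (of_nat n - complex_of_real a) (PPc n a b)
    - smult (complex_of_real b) (pCons 0 (PPc n a b + pderiv (PPc n a b)))) x" for x
    using P_rec[of n a b x] unfolding P_poly PPc_shift by (simp add: algebra_simps)
  then show ?thesis by (simp add: poly_eq_poly_eq_iff[symmetric] fun_eq_iff)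
qed

lemma PPc_0: "PPc 0 a b = 1"
  unfolding PPc_def cf_def by (simp add: one_pCons monom_0)



definition RR :: "real poly \<Rightarrow> bool" where
  "RR p \<longleftrightarrow> (\<exists>a M. a \<noteq> 0 \<and> p = smult a (prod_mset (image_mset (\<lambda>r. [:-r,1:]) M)))"

lemma RR_1: "RR 1"
  unfolding RR_def by (rule exI[of _ 1], rule exI[of _ "{#}"]) simp

lemma RR_smult: "a \<noteq> 0 \<Longrightarrow> RR p \<Longrightarrow> RR (smult a p)"
proof -
  assume a: "a \<noteq> 0" "RR p"
  then obtain b M where "b \<noteq> 0" "p = smult b (prod_mset (image_mset (\<lambda>r. [:-r,1:]) M))"
    unfolding RR_def by blast
  then show ?thesis unfolding RR_def using a(1) by (intro exI[of _ "a * b"] exI[of _ M]) simp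
qed

lemma RR_mult: "RR p \<Longrightarrow> RR q \<Longrightarrow> RR (p * q)"
proof -
  assume "RR p" "RR q"
  then obtain a M b N where "a \<noteq> 0" "p = smult a (prod_mset (image_mset (\<lambda>r. [:-r,1:]) M))"
     "b \<noteq> 0" "q = smult b (prod_mset (image_mset (\<lambda>r. [:-r,1:]) N))" unfolding RR_def by blast
  then show "RR (p * q)" unfolding RR_def
    by (intro exI[of _ "a * b"] exI[of _ "M + N"]) (simp add: mult_ac)
qed

lemma RR_lin1: "RR [:-r, 1:]"
  unfolding RR_def by (rule exI[of _ 1], rule exI[of _ "{#r#}"]) simp

lemma RR_lin: "v \<noteq> 0 \<Longrightarrow> RR [:u, v:]"
proof -
  assume v: "v \<noteq> 0"
  have e: "[:u, v:] = smult v [:-(-u/v), 1:]" using v by simp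
  show ?thesis unfolding e by (rule RR_smult[OF v RR_lin1])
qed

lemma RR_prod: "(\<And>s. s \<in> S \<Longrightarrow> RR (f s)) \<Longrightarrow> RR (\<Prod>s\<in>S. f s)"
  by (induction S rule: infinite_finite_induct) (auto simp: RR_1 RR_mult)

lemma RR_power: "RR p \<Longrightarrow> RR (p ^ n)"
  by (induction n) (auto simp: RR_1 RR_mult)

lemma RR_quad:
  assumes c2: "c2 \<noteq> 0" and d: "c1^2 - 4 * c2 * c0 \<ge> 0"
  shows "RR [:c0, c1, c2:]"
proof -
  define D where "D = sqrt (c1^2 - 4 * c2 * c0)"
  have DD: "D * D = c1^2 - 4 * c2 * c0" unfolding D_def using d by simp
  define r1 where "r1 = (- c1 + D) / (2 * c2)"
  define r2 where "r2 = (- c1 - D) / (2 * c2)"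
  have "[:c0, c1, c2:] = smult c2 ([:-r1, 1:] * [:-r2, 1:])"
  proof -
    have s: "c2 * (r1 + r2) = - c1" unfolding r1_def r2_def using c2 by (simp add: field_simps)
    have "r1 * r2 = (c1 * c1 - D * D) / (4 * c2 * c2)" unfolding r1_def r2_def using c2
      by (simp add: field_simps)
    also have "\<dots> = c0 / c2"
    proof -
      have e: "c1 * c1 - D * D = 4 * c2 * c0" using DD by (simp add: power2_eq_square)
      show ?thesis using c2 unfolding e by simp
    qed
    finally have p: "c2 * (r1 * r2) = c0" using c2 by simp
    show ?thesis using s p by (simp add: algebra_simps)
  qed
  then show ?thesis using RR_smult[OF c2 RR_mult[OF RR_lin1 RR_lin1]] by simp
qed

lemma mp_mult: "map_poly complex_of_real (p * q) = map_poly complex_of_real p * map_poly complex_of_real q"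
  by (rule poly_eqI) (simp add: coeff_map_poly coeff_mult of_real_sum)

lemma RR_zeros:
  assumes "RR p" "poly (map_poly complex_of_real p) z = 0"
  shows "z \<in> \<real>"
proof -
  obtain a M where a: "a \<noteq> 0" and p: "p = smult a (prod_mset (image_mset (\<lambda>r. [:-r,1:]) M))"
    using assms(1) unfolding RR_def by blast
  have mps: "map_poly complex_of_real (smult a q) = smult (of_real a) (map_poly of_real q)" for q
    by (rule poly_eqI) (simp add: coeff_map_poly)
  have "poly (map_poly complex_of_real (prod_mset (image_mset (\<lambda>r. [:-r,1:]) M))) z = 0 \<Longrightarrow> z \<in> \<real>"
  proof (induction M)
    case empty then show ?case by simp
  next
    case (add x M)
    have l: "poly (map_poly complex_of_real [:-x,1:]) z = z - of_real x"
      by (simp add: map_poly_pCons)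
    from add.prems have "z - of_real x = 0 \<or> poly (map_poly complex_of_real (prod_mset (image_mset (\<lambda>r. [:-r,1:]) M))) z = 0"
      unfolding image_mset_add_mset prod_mset.add_mset mp_mult poly_mult l by simp
    then show ?case using add.IH by (auto simp: eq_iff_diff_eq_0[symmetric])
  qed
  then show ?thesis using assms(2) a unfolding p mps by simp
qed

lemma RR_of_roots:
  assumes T: "finite T" and r: "\<forall>x\<in>T. poly q x = 0" and d: "degree q = Suc (card T)"
  shows "RR q"
proof -
  have dvd: "\<forall>q. (\<forall>x\<in>T. poly q x = 0) \<longrightarrow> (\<Prod>x\<in>T. [:-x,1:]) dvd q"
    using T
  proof (induction T rule: finite_induct)
    case empty then show ?case by simp
  next
    case (insert y F)
    show ?case
    proof (intro allI impI)
      fix q :: "real poly"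
      assume h: "\<forall>x\<in>insert y F. poly q x = 0"
      then have "[:-y,1:] dvd q" by (simp add: poly_eq_0_iff_dvd)
      then obtain q' where q': "q = [:-y,1:] * q'" by (elim dvdE)
      have "\<forall>x\<in>F. poly q' x = 0"
      proof
        fix x assume "x \<in> F"
        then have "x \<noteq> y" "poly q x = 0" using h insert.hyps by auto
        then show "poly q' x = 0" unfolding q' by simp
      qed
      then have "(\<Prod>x\<in>F. [:-x,1:]) dvd q'" using insert.IH by blast
      moreover have "(\<Prod>x\<in>insert y F. [:-x,1:]) = [:-y,1:] * (\<Prod>x\<in>F. [:-x,1:])"
        using insert.hyps by simp
      ultimately show "(\<Prod>x\<in>insert y F. [:-x,1:]) dvd q" unfolding q' by (metis mult_dvd_mono dvd_refl)
    qed
  qed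
  then obtain r0 where q: "q = (\<Prod>x\<in>T. [:-x,1:]) * r0" using r by (blast elim: dvdE)
  have q0: "q \<noteq> 0" using d by auto
  have P0: "(\<Prod>x\<in>T. [:-x,1:]) \<noteq> (0::real poly)" using T by (simp)
  have dP: "degree ((\<Prod>x\<in>T. [:-x,1:]) :: real poly) = card T"
    by (subst degree_prod_sum_eq) auto
  have r00: "r0 \<noteq> 0" using q0 q by auto
  have dr: "degree r0 = 1" using d unfolding q degree_mult_eq[OF P0 r00] dP by simp
  have rl: "r0 = [:coeff r0 0, coeff r0 1:]"
  proof (rule poly_eqI)
    fix n show "coeff r0 n = coeff [:coeff r0 0, coeff r0 1:] n"
      using dr by (cases n; cases "n - 1") (auto simp: coeff_eq_0)
  qed
  have "coeff r0 1 \<noteq> 0" using dr by (metis leading_coeff_0_iff r00)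
  then have "RR r0" by (subst rl) (rule RR_lin)
  moreover have "RR (\<Prod>x\<in>T. [:-x,1:])" by (rule RR_prod) (rule RR_lin1)
  ultimately show ?thesis unfolding q by (rule RR_mult[rotated])
qed

lemma sgnprod:
  fixes u :: real
  assumes "finite V" "u \<notin> V"
  shows "(\<Prod>v\<in>V. (u - v)) * (-1)^card {v\<in>V. u < v} > 0"
  using assms
proof (induction V rule: finite_induct)
  case empty then show ?case by simp
next
  case (insert x F)
  have ux: "u \<noteq> x" using insert by auto
  have fin: "finite {v\<in>F. u < v}" using insert by auto
  have IH: "(\<Prod>v\<in>F. (u - v)) * (-1)^card {v\<in>F. u < v} > 0" using insert by auto
  show ?case
  proof (cases "u < x")
    case True
    then have "{v\<in>insert x F. u < v} = insert x {v\<in>F. u < v}" by auto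
    then have c: "card {v\<in>insert x F. u < v} = Suc (card {v\<in>F. u < v})" using insert fin by simp
    have "(\<Prod>v\<in>insert x F. (u - v)) * (-1)^card {v\<in>insert x F. u < v} =
       ((x - u)) * ((\<Prod>v\<in>F. (u - v)) * (-1)^card {v\<in>F. u < v})"
      unfolding c using insert by (simp add: algebra_simps)
    then show ?thesis using IH True by simp
  next
    case False
    then have "{v\<in>insert x F. u < v} = {v\<in>F. u < v}" by auto
    then have "(\<Prod>v\<in>insert x F. (u - v)) * (-1)^card {v\<in>insert x F. u < v} =
       ((u - x)) * ((\<Prod>v\<in>F. (u - v)) * (-1)^card {v\<in>F. u < v})"
      using insert by (simp add: algebra_simps)
    then show ?thesis using IH False ux by simp
  qed
qed

definition Rw :: "real set \<Rightarrow> real \<Rightarrow> (real \<Rightarrow> real) \<Rightarrow> real poly" where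
  "Rw S c w = [:c,1:] * (\<Prod>s\<in>S. [:-s,1:]) + pCons 0 (\<Sum>s\<in>S. smult (w s) (\<Prod>i\<in>S-{s}. [:-i,1:]))"

lemma Rw_eval:
  assumes S: "finite S" "0 \<notin> S" and u: "u \<in> insert 0 S"
  shows "poly (Rw S c w) u = (if u = 0 then c else w u) * (\<Prod>v\<in>insert 0 S - {u}. (u - v))"
proof (cases "u = 0")
  case True
  have "insert 0 S - {0} = S" using S by auto
  then show ?thesis unfolding Rw_def using True by (simp add: poly_prod poly_sum)
next
  case False
  then have uS: "u \<in> S" using u by auto
  have p0: "poly (\<Prod>s\<in>S. [:-s,1:]) u = 0" using uS S by (simp add: poly_prod)
  have "(\<Sum>s\<in>S. poly (smult (w s) (\<Prod>i\<in>S-{s}. [:-i,1:])) u) =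
     poly (smult (w u) (\<Prod>i\<in>S-{u}. [:-i,1:])) u"
  proof (rule sum.remove[OF S(1) uS, THEN trans])
    have "(\<Sum>s\<in>S-{u}. poly (smult (w s) (\<Prod>i\<in>S-{s}. [:-i,1:])) u) = 0"
      by (rule sum.neutral) (use S uS in \<open>auto simp: poly_prod\<close>)
    then show "poly (smult (w u) (\<Prod>i\<in>S-{u}. [:-i,1:])) u + (\<Sum>s\<in>S-{u}. poly (smult (w s) (\<Prod>i\<in>S-{s}. [:-i,1:])) u) =
       poly (smult (w u) (\<Prod>i\<in>S-{u}. [:-i,1:])) u" by simp
  qed
  moreover have "insert 0 S - {u} = insert 0 (S - {u})" using False by auto
  moreover have z: "prod ((-) u) S = 0"
    by (rule prod_zero[OF S(1)]) (use uS in auto)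
  ultimately show ?thesis unfolding Rw_def using False S p0
    by (simp add: poly_sum poly_prod z)
qed

lemma Rw_degree:
  assumes S: "finite S"
  shows "degree (Rw S c w) = Suc (card S)"
proof -
  have P0: "(\<Prod>x\<in>S. [:-x,1:]) \<noteq> (0::real poly)" using S by simp
  have dP: "degree ((\<Prod>x\<in>S. [:-x,1:]) :: real poly) = card S"
    by (subst degree_prod_sum_eq) auto
  have d1: "degree ([:c,1:] * (\<Prod>s\<in>S. [:-s,1:])) = Suc (card S)"
    by (subst degree_mult_eq) (use P0 dP in auto)
  have d2: "degree (pCons 0 (\<Sum>s\<in>S. smult (w s) (\<Prod>i\<in>S-{s}. [:-i,1:]))) < Suc (card S)"
  proof (cases "S = {}")
    case True then show ?thesis by simp
  next
    case False
    have "degree (\<Sum>s\<in>S. smult (w s) (\<Prod>i\<in>S-{s}. [:-i,1:])) \<le> card S - 1"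
    proof (rule degree_sum_le[OF S])
      fix s assume s: "s \<in> S"
      have "degree ((\<Prod>i\<in>S-{s}. [:-i,1:]) :: real poly) = card (S - {s})"
        by (subst degree_prod_sum_eq) auto
      then show "degree (smult (w s) (\<Prod>i\<in>S-{s}. [:-i,1:])) \<le> card S - 1"
        using s S by (metis card_Diff_singleton degree_smult_le)
    qed
    moreover have "card S > 0" using False S by auto
    ultimately show ?thesis using degree_pCons_le[of 0 "(\<Sum>s\<in>S. smult (w s) (\<Prod>i\<in>S-{s}. [:-i,1:]))"] by linarith
  qed
  show ?thesis unfolding Rw_def using d1 d2 by (subst degree_add_eq_left) auto
qed

lemma neg1_pow_cases: "(-1::real)^k = 1 \<or> (-1::real)^k = -1"
  by (cases "even k") auto

lemma W:
  assumes S: "finite S" "0 \<notin> S" and c: "c > 0" and w: "\<forall>s\<in>S. w s > 0"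
  shows "RR (Rw S c w)"
proof -
  define U where "U = insert (0::real) S"
  define m where "m = card S"
  define xs where "xs = sorted_list_of_set U"
  have fU: "finite U" unfolding U_def using S by simp
  have cU: "card U = Suc m" unfolding U_def m_def using S by simp
  have lxs: "length xs = Suc m" unfolding xs_def using cU fU by simp
  have sxs: "set xs = U" unfolding xs_def using fU by simp
  have strict: "sorted_wrt (<) xs" unfolding xs_def by simp
  have lt: "xs ! i < xs ! j" if "i < j" "j < Suc m" for i j
    using strict that lxs by (simp add: sorted_wrt_iff_nth_less)
  have lt_iff: "xs ! i < xs ! j \<longleftrightarrow> i < j" if "i < Suc m" "j < Suc m" for i j
    using lt that by (metis less_asym' linorder_neqE_nat)
  have cardgt: "card {v\<in>U. xs ! i < v} = m - i" if "i < Suc m" for i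
  proof -
    have "{v\<in>U. xs ! i < v} = (\<lambda>j. xs ! j) ` {Suc i..<Suc m}"
    proof
      show "{v\<in>U. xs ! i < v} \<subseteq> (\<lambda>j. xs ! j) ` {Suc i..<Suc m}"
      proof
        fix v assume v: "v \<in> {v\<in>U. xs ! i < v}"
        then obtain j where j: "j < Suc m" "v = xs ! j" using sxs lxs by (auto simp: in_set_conv_nth)
        then have "i < j" using v lt_iff[OF that j(1)] by auto
        then show "v \<in> (\<lambda>j. xs ! j) ` {Suc i..<Suc m}" using j by auto
      qed
      show "(\<lambda>j. xs ! j) ` {Suc i..<Suc m} \<subseteq> {v\<in>U. xs ! i < v}"
      proof
        fix v assume "v \<in> (\<lambda>j. xs ! j) ` {Suc i..<Suc m}"
        then obtain j where j: "j \<in> {Suc i..<Suc m}" "v = xs ! j" by auto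
        have "v \<in> U" using j lxs sxs nth_mem[of j xs] by auto
        moreover have "xs ! i < v" using j lt by auto
        ultimately show "v \<in> {v\<in>U. xs ! i < v}" by simp
      qed
    qed
    moreover have "inj_on (\<lambda>j. xs ! j) {Suc i..<Suc m}"
      using lt by (auto simp: inj_on_def) (metis linorder_neqE_nat less_irrefl)
    ultimately show ?thesis by (simp add: card_image)
  qed
  have sgn: "poly (Rw S c w) (xs ! i) * (-1)^(m - i) > 0" if "i < Suc m" for i
  proof -
    define u where "u = xs ! i"
    have uU: "u \<in> U" unfolding u_def using that lxs sxs by auto
    have "{v\<in>U - {u}. u < v} = {v\<in>U. u < v}" by auto
    then have "(\<Prod>v\<in>U - {u}. (u - v)) * (-1)^(m - i) > 0"
      using sgnprod[of "U - {u}" u] fU cardgt[OF that] unfolding u_def by simp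
    moreover have "(if u = 0 then c else w u) > 0" using c w uU unfolding U_def by auto
    ultimately have "(if u = 0 then c else w u) * ((\<Prod>v\<in>U - {u}. (u - v)) * (-1)^(m - i)) > 0"
      by simp
    then show ?thesis using Rw_eval[OF S uU[unfolded U_def]] unfolding u_def U_def by (simp add: mult.assoc)
  qed
  have ivt: "\<exists>x. xs ! i < x \<and> x < xs ! Suc i \<and> poly (Rw S c w) x = 0" if "i < m" for i
  proof -
    have e: "m - i = Suc (m - Suc i)" using that by simp
    have a1: "poly (Rw S c w) (xs ! i) * (-1)^(m - i) > 0" using sgn that by simp
    have a2: "poly (Rw S c w) (xs ! Suc i) * (-1)^(m - Suc i) > 0" using sgn that by simp
    have "poly (Rw S c w) (xs ! i) * poly (Rw S c w) (xs ! Suc i) < 0"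
      using a1 a2 neg1_pow_cases[of "m - Suc i"] unfolding e
      by (auto simp: mult_less_0_iff zero_less_mult_iff)
    then show ?thesis using poly_IVT[OF lt[of i "Suc i"]] that by auto
  qed
  then have "\<forall>i. \<exists>x. i < m \<longrightarrow> xs ! i < x \<and> x < xs ! Suc i \<and> poly (Rw S c w) x = 0" by blast
  then obtain t where t: "\<And>i. i < m \<Longrightarrow> xs ! i < t i \<and> t i < xs ! Suc i \<and> poly (Rw S c w) (t i) = 0"
    by (metis choice)
  have inj: "inj_on t {..<m}"
  proof (rule inj_onI)
    fix i j assume ij: "i \<in> {..<m}" "j \<in> {..<m}" "t i = t j"
    show "i = j"
    proof (rule ccontr)
      assume "i \<noteq> j"
      then consider "i < j" | "j < i" by linarith
      then show False
      proof cases
        case 1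
        have "t i < xs ! Suc i" using t[of i] ij(1) by auto
        also have "xs ! Suc i \<le> xs ! j" using 1 ij lt[of "Suc i" j] by (cases "Suc i = j") auto
        also have "xs ! j < t j" using t[of j] ij(2) by auto
        finally show False using ij by simp
      next
        case 2
        have "t j < xs ! Suc j" using t[of j] ij(2) by auto
        also have "xs ! Suc j \<le> xs ! i" using 2 ij lt[of "Suc j" i] by (cases "Suc j = i") auto
        also have "xs ! i < t i" using t[of i] ij(1) by auto
        finally show False using ij by simp
      qed
    qed
  qed
  show ?thesis
  proof (rule RR_of_roots[of "t ` {..<m}"])
    show "finite (t ` {..<m})" by simp
    show "\<forall>x\<in>t ` {..<m}. poly (Rw S c w) x = 0" using t by auto
    show "degree (Rw S c w) = Suc (card (t ` {..<m}))"
      using Rw_degree[OF S(1)] card_image[OF inj] unfolding m_def by simp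
  qed
qed

definition xpoly :: "real poly" where "xpoly = [:0,1:]"

lemma px: "pCons 0 q = xpoly * (q :: real poly)"
  by (simp add: xpoly_def)

lemma RR_xpoly: "RR xpoly"
  using RR_lin1[of 0] by (simp add: xpoly_def)

lemma Rw_zero:
  assumes S: "finite S" "0 \<in> S"
  shows "Rw S c w = xpoly * Rw (S - {0}) (c + w 0) w"
proof -
  define S' where "S' = S - {0}"
  have Sq: "(\<Prod>s\<in>S. [:-s,1:]) = xpoly * (\<Prod>s\<in>S'. [:-s,1:])"
    unfolding S'_def using prod.remove[OF S, of "\<lambda>s. [:-s,1:]"] by (simp add: xpoly_def)
  have Pi: "(\<Prod>i\<in>S-{s}. [:-i,1:]) = xpoly * (\<Prod>i\<in>S'-{s}. [:-i,1:])" if "s \<in> S'" for s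
  proof -
    have "S - {s} = insert 0 (S' - {s})" using that S unfolding S'_def by auto
    then show ?thesis using S by (simp add: S'_def xpoly_def)
  qed
  have Sm: "(\<Sum>s\<in>S. smult (w s) (\<Prod>i\<in>S-{s}. [:-i,1:])) =
      smult (w 0) (\<Prod>s\<in>S'. [:-s,1:]) + xpoly * (\<Sum>s\<in>S'. smult (w s) (\<Prod>i\<in>S'-{s}. [:-i,1:]))"
  proof -
    have "(\<Sum>s\<in>S. smult (w s) (\<Prod>i\<in>S-{s}. [:-i,1:])) =
        smult (w 0) (\<Prod>s\<in>S'. [:-s,1:]) + (\<Sum>s\<in>S'. smult (w s) (\<Prod>i\<in>S-{s}. [:-i,1:]))"
      unfolding S'_def using sum.remove[OF S, of "\<lambda>s. smult (w s) (\<Prod>i\<in>S-{s}. [:-i,1:])"] by simp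
    also have "(\<Sum>s\<in>S'. smult (w s) (\<Prod>i\<in>S-{s}. [:-i,1:])) = (\<Sum>s\<in>S'. xpoly * smult (w s) (\<Prod>i\<in>S'-{s}. [:-i,1:]))"
      by (rule sum.cong) (simp_all add: Pi)
    finally show ?thesis by (simp add: sum_distrib_left)
  qed
  show ?thesis unfolding Rw_def S'_def[symmetric] Sq Sm px
    by (simp add: algebra_simps smult_add_left)
qed

lemma pderiv_lin_pow: "pderiv ([:-s,1:] ^ k) = smult (of_nat k) ([:-s,1:] ^ (k - 1) :: real poly)"
proof (cases k)
  case (Suc n)
  then show ?thesis using pderiv_power_Suc[of "[:-s,1:]" n] by (simp add: pderiv_pCons del: power_Suc)
qed simp

lemma G_core:
  assumes S: "finite S" and w: "\<forall>s\<in>S. w s \<ge> 1"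
  shows "[:c,1:] * (\<Prod>s\<in>S. [:-s,1:] ^ w s) + pCons 0 (pderiv (\<Prod>s\<in>S. [:-s,1:] ^ w s))
     = (\<Prod>s\<in>S. [:-s,1:] ^ (w s - 1)) * Rw S c (\<lambda>s. real (w s))"
proof -
  define D where "D = (\<Prod>s\<in>S. [:-s,1:] ^ (w s - 1) :: real poly)"
  have pw: "([:-s,1:] ^ w s :: real poly) = [:-s,1:] ^ (w s - 1) * [:-s,1:]" if "s \<in> S" for s
    using w that by (metis le_add_diff_inverse2 power_Suc2 Suc_eq_plus1)
  have Q0: "(\<Prod>s\<in>S. [:-s,1:] ^ w s) = D * (\<Prod>s\<in>S. [:-s,1:])"
    unfolding D_def prod.distrib[symmetric] by (rule prod.cong) (simp_all add: pw)
  have dQ: "pderiv (\<Prod>s\<in>S. [:-s,1:] ^ w s) = D * (\<Sum>s\<in>S. smult (real (w s)) (\<Prod>i\<in>S-{s}. [:-i,1:]))"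
    unfolding pderiv_prod sum_distrib_left
  proof (rule sum.cong[OF refl])
    fix s assume s: "s \<in> S"
    have D: "D = [:-s,1:] ^ (w s - 1) * (\<Prod>i\<in>S-{s}. [:-i,1:] ^ (w i - 1))"
      unfolding D_def using prod.remove[OF S s] .
    have "(\<Prod>i\<in>S-{s}. [:-i,1:] ^ w i) = (\<Prod>i\<in>S-{s}. [:-i,1:] ^ (w i - 1)) * (\<Prod>i\<in>S-{s}. [:-i,1:])"
      unfolding prod.distrib[symmetric] by (rule prod.cong) (auto simp: pw)
    then show "(\<Prod>i\<in>S-{s}. [:-i,1:] ^ w i) * pderiv ([:-s,1:] ^ w s) =
        D * smult (real (w s)) (\<Prod>i\<in>S-{s}. [:-i,1:])"
      unfolding D pderiv_lin_pow by (simp add: algebra_simps)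
  qed
  show ?thesis unfolding dQ unfolding Q0 Rw_def D_def[symmetric] px by (simp add: algebra_simps)
qed

lemma G:
  assumes p: "RR p" and c: "c > 0"
  shows "RR ([:c,1:] * p + pCons 0 (pderiv p))"
proof -
  obtain a M where a: "a \<noteq> 0" and pe: "p = smult a (prod_mset (image_mset (\<lambda>r. [:-r,1:]) M))"
    using p unfolding RR_def by blast
  define S where "S = set_mset M"
  define w where "w = count M"
  have S: "finite S" unfolding S_def by simp
  have w: "\<forall>s\<in>S. w s \<ge> 1" unfolding S_def w_def by (simp add: Suc_le_eq)
  have pe2: "p = smult a (\<Prod>s\<in>S. [:-s,1:] ^ w s)"
    unfolding pe image_prod_mset_multiplicity S_def w_def ..
  have eq: "[:c,1:] * p + pCons 0 (pderiv p) = smult a ((\<Prod>s\<in>S. [:-s,1:] ^ (w s - 1)) * Rw S c (\<lambda>s. real (w s)))"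
    unfolding G_core[OF S w, symmetric] pe2 pderiv_smult px by (simp add: algebra_simps smult_add_right)
  have RD: "RR (\<Prod>s\<in>S. [:-s,1:] ^ (w s - 1))" by (intro RR_prod RR_power RR_lin1)
  have wp: "\<forall>s\<in>S. real (w s) > 0" using w by auto
  have RB: "RR (Rw S c (\<lambda>s. real (w s)))"
  proof (cases "0 \<in> S")
    case False
    then show ?thesis using W[OF S False c wp] by simp
  next
    case True
    have "RR (Rw (S - {0}) (c + real (w 0)) (\<lambda>s. real (w s)))"
      by (rule W) (use S c wp in auto)
    then show ?thesis unfolding Rw_zero[OF S True] using RR_mult[OF RR_xpoly] by simp
  qed
  show ?thesis unfolding eq by (intro RR_smult a RR_mult RD RB)
qed



fun PP :: "real \<Rightarrow> real \<Rightarrow> nat \<Rightarrow> real poly" where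
  "PP a b 0 = 1"
| "PP a b (Suc n) = smult (real n - a) (PP a b n) - smult b (pCons 0 (PP a b n + pderiv (PP a b n)))"

lemma PPc_PP: "PPc n a b = map_poly complex_of_real (PP a b n)"
proof (induction n)
  case 0 then show ?case by (simp add: PPc_0)
next
  case (Suc n)
  show ?case unfolding PPc_rec Suc PP.simps
    by (rule poly_eqI) (simp add: coeff_map_poly coeff_pderiv coeff_pCons split: nat.split)
qed

lemma P_real_zero: "RR (PP a b n) \<Longrightarrow> P n a b z = 0 \<Longrightarrow> z \<in> \<real>"
  unfolding P_poly PPc_PP by (rule RR_zeros)

lemma PP_step:
  assumes b: "b \<noteq> 0"
  shows "PP a b (Suc k) = smult (-b) ([:(a - real k)/b, 1:] * PP a b k + pCons 0 (pderiv (PP a b k)))"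
proof -
  define p where "p = PP a b k"
  have e1: "[:(a - real k)/b, 1:] * p + pCons 0 (pderiv p) = smult ((a - real k)/b) p + pCons 0 (p + pderiv p)"
    by (simp add: mult_pCons_left)
  have cb: "smult (-b) (smult ((a - real k)/b) p) = smult (real k - a) p"
    using b by simp
  have "smult (-b) ([:(a - real k)/b, 1:] * p + pCons 0 (pderiv p)) = smult (real k - a) p - smult b (pCons 0 (p + pderiv p))"
    unfolding e1 smult_add_right cb by simp
  then show ?thesis unfolding p_def by simp
qed

lemma step_RR:
  assumes b: "b \<noteq> 0" and c: "(a - real k)/b > 0" and r: "RR (PP a b k)"
  shows "RR (PP a b (Suc k))"
  unfolding PP_step[OF b] using b by (intro RR_smult G r c) auto

lemma PP1: "PP a b 1 = [:-a, -b:]"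
  by (simp add: numeral_2_eq_2)

lemma PP2: "PP a b 2 = [:a^2 - a, b * (b - 1 + 2 * a), b^2:]"
  by (rule poly_eqI) (auto simp: numeral_2_eq_2 coeff_pCons coeff_pderiv power2_eq_square algebra_simps split: nat.split)

theorem theorem3:
  fixes \<alpha> \<beta> :: real
  shows "((\<beta> - 1)\<^sup>2 + 4 * \<alpha> * \<beta> \<ge> 0 \<and> \<beta> < 0 \<and> \<alpha> \<le> 2 \<longrightarrow>
            (\<forall>n::nat. n \<ge> 1 \<longrightarrow> only_real_zeros (P n \<alpha> \<beta>)))
       \<and> (\<beta> > 0 \<and> \<alpha> \<ge> 1 \<longrightarrow>
            (\<forall>n::nat. 1 \<le> n \<and> int n \<le> \<lceil>\<alpha>\<rceil> \<longrightarrow> only_real_zeros (P n \<alpha> \<beta>)))"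
proof (intro conjI impI allI)
  fix n :: nat
  assume h: "(\<beta> - 1)\<^sup>2 + 4 * \<alpha> * \<beta> \<ge> 0 \<and> \<beta> < 0 \<and> \<alpha> \<le> 2" and n: "n \<ge> 1"
  then have b: "\<beta> \<noteq> 0" "\<beta> < 0" by auto
  have R2: "RR (PP \<alpha> \<beta> 2)"
  proof -
    have e: "(\<beta> * (\<beta> - 1 + 2 * \<alpha>))\<^sup>2 - 4 * \<beta>\<^sup>2 * (\<alpha>\<^sup>2 - \<alpha>) = \<beta>\<^sup>2 * ((\<beta> - 1)\<^sup>2 + 4 * \<alpha> * \<beta>)"
      by (simp add: power2_eq_square algebra_simps)
    have "(\<beta> * (\<beta> - 1 + 2 * \<alpha>))\<^sup>2 - 4 * \<beta>\<^sup>2 * (\<alpha>\<^sup>2 - \<alpha>) \<ge> 0"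
      unfolding e using h by simp
    then show ?thesis unfolding PP2 using b by (intro RR_quad) auto
  qed
  have Rk: "RR (PP \<alpha> \<beta> k)" if "k \<ge> 2" for k
    using that
  proof (induction k rule: nat_induct_at_least)
    case base then show ?case by (rule R2)
  next
    case (Suc k)
    show ?case
    proof (cases "\<alpha> = real k")
      case False
      then have "(\<alpha> - real k) / \<beta> > 0" using h Suc.hyps b by (auto simp: divide_neg_neg)
      then show ?thesis using step_RR[OF b(1) _ Suc.IH] by simp
    next
      case True
      then have a2: "\<alpha> = 2" "k = 2" using h Suc.hyps by auto
      have e: "PP \<alpha> \<beta> (Suc k) = smult (-\<beta>) (xpoly * [:2 + \<beta>\<^sup>2 + 3 * \<beta>, 3 * \<beta>\<^sup>2 + 3 * \<beta>, \<beta>\<^sup>2:])"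
        unfolding PP_step[OF b(1)] a2 PP2 px[symmetric]
        by (simp add: power2_eq_square algebra_simps pderiv_pCons)
      have d: "(3 * \<beta>\<^sup>2 + 3 * \<beta>)\<^sup>2 - 4 * \<beta>\<^sup>2 * (2 + \<beta>\<^sup>2 + 3 * \<beta>) = \<beta>\<^sup>2 * ((\<beta>\<^sup>2 + 6 * \<beta> + 1) + 4 * \<beta>\<^sup>2)"
        by (simp add: power2_eq_square algebra_simps pderiv_pCons)
      have "\<beta>\<^sup>2 + 6 * \<beta> + 1 \<ge> 0" using h a2 by (simp add: power2_eq_square algebra_simps)
      moreover have "4 * \<beta>\<^sup>2 \<ge> 0" by simp
      ultimately have "(\<beta>\<^sup>2 + 6 * \<beta> + 1) + 4 * \<beta>\<^sup>2 \<ge> 0" by linarith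
      then have "(3 * \<beta>\<^sup>2 + 3 * \<beta>)\<^sup>2 - 4 * \<beta>\<^sup>2 * (2 + \<beta>\<^sup>2 + 3 * \<beta>) \<ge> 0"
        unfolding d by (rule mult_nonneg_nonneg[OF zero_le_power2])
      then have "RR [:2 + \<beta>\<^sup>2 + 3 * \<beta>, 3 * \<beta>\<^sup>2 + 3 * \<beta>, \<beta>\<^sup>2:]" using b by (intro RR_quad) auto
      then show ?thesis unfolding e using b by (intro RR_smult RR_mult RR_xpoly) auto
    qed
  qed
  have "RR (PP \<alpha> \<beta> n)"
  proof (cases "n = 1")
    case True
    then show ?thesis unfolding True PP1 using b by (intro RR_lin) auto
  next
    case False
    then show ?thesis using n Rk by simp
  qed
  then show "only_real_zeros (P n \<alpha> \<beta>)" unfolding only_real_zeros_def using P_real_zero by blast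
next
  fix n :: nat
  assume h: "\<beta> > 0 \<and> \<alpha> \<ge> 1" and n: "1 \<le> n \<and> int n \<le> \<lceil>\<alpha>\<rceil>"
  then have b: "\<beta> \<noteq> 0" by auto
  have Rk: "RR (PP \<alpha> \<beta> k)" if "real k - 1 < \<alpha>" for k
    using that
  proof (induction k)
    case 0 then show ?case by (simp add: RR_1)
  next
    case (Suc k)
    have "(\<alpha> - real k) / \<beta> > 0" using Suc.prems h by simp
    then show ?case using step_RR[OF b _ Suc.IH] Suc.prems by simp
  qed
  have "real n - 1 < \<alpha>" using n le_ceiling_iff[of "int n" \<alpha>] by simp
  then show "only_real_zeros (P n \<alpha> \<beta>)" unfolding only_real_zeros_def using P_real_zero Rk by blast
qed

end
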